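(* For positive integers $r,n$, $$T(r,n):=\sum_{t\mid r}\frac{|\mu(t_{(n)})|}{\phi(t_{(n)})}\,\phi(t)=\gcd(r,n)\cdot W\big(\gcd(r,r_{(n)})\big).$$
   Context: For positive integers $a,b$, $a_{(b)}:=a/\gcd(a,b)$. $\mu$ is the Möbius function, $\phi$ is Euler's totient function, and $W(a)$ denotes the number of square-free divisors of the positive integer $a$. *)

theory Defs
  imports "HOL-Number_Theory.Number_Theory" "HOL-Computational_Algebra.Squarefree"
begin

definition moebius_mu :: "nat \<Rightarrow> int" where
  "moebius_mu n = (if squarefree n then (-1) ^ card (prime_factors n) else 0)"

text \<open>a_(b) := a / gcd(a,b)\<close>
definition coprime_part :: "nat \<Rightarrow> nat \<Rightarrow> nat" where
  "coprime_part a b = a div gcd a b"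

definition W :: "nat \<Rightarrow> nat" where
  "W a = card {d. d dvd a \<and> squarefree d}"

end

theory Submission imports Defs begin
lemma gcd_mult_coprime_nat:
  fixes a b c :: nat
  assumes "coprime a b"
  shows "gcd (a*b) c = gcd a c * gcd b c"
proof (rule dvd_antisym)
  obtain u v where uv: "gcd (a*b) c = u*v" "u dvd a" "v dvd b"
    using dvd_productE[of "gcd (a*b) c" a b] by auto
  have "u dvd gcd (a*b) c" "v dvd gcd (a*b) c" using uv(1) by simp_all
  hence "u dvd c" "v dvd c" using gcd_dvd2 dvd_trans by blast+
  hence "u dvd gcd a c" "v dvd gcd b c" using uv by auto
  thus "gcd (a*b) c dvd gcd a c * gcd b c" using uv by (simp add: mult_dvd_mono)
next
  have cp: "coprime (gcd a c) (gcd b c)" using assms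
    by (rule coprime_imp_coprime) (meson gcd_dvd1 dvd_trans)+
  have "gcd a c dvd gcd (a*b) c" "gcd b c dvd gcd (a*b) c"
    by (simp_all add: gcd_mono)
  thus "gcd a c * gcd b c dvd gcd (a*b) c" using cp by (simp add: divides_mult)
qed
lemma cp_mult:
  fixes a b n :: nat
  assumes "coprime a b"
  shows "coprime_part (a*b) n = coprime_part a n * coprime_part b n"
  unfolding coprime_part_def using assms
  by (simp add: gcd_mult_coprime_nat div_mult_div_if_dvd)

lemma cp_dvd: "coprime_part a n dvd (a::nat)"
  unfolding coprime_part_def by (metis dvd_div_mult_self dvd_triv_left gcd_dvd1)

lemma sqf_mult_coprime_iff:
  fixes a b :: nat
  assumes "coprime a b"
  shows "squarefree (a*b) \<longleftrightarrow> squarefree a \<and> squarefree b"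
  using assms squarefree_mult_coprime squarefree_multD by blast

lemma dsum_mult:
  fixes a b :: nat and h :: "nat \<Rightarrow> 'c::comm_monoid_add"
  assumes "coprime a b" "a > 0" "b > 0"
  shows "(\<Sum>t | t dvd a*b. h t) = (\<Sum>d | d dvd a. \<Sum>e | e dvd b. h (d*e))"
proof -
  have eq: "{t. t dvd a*b} = (\<lambda>(d,e). d*e) ` ({d. d dvd a} \<times> {e. e dvd b})"
  proof safe
    fix t assume "t dvd a*b"
    then obtain x y where "t = x*y" "x dvd a" "y dvd b" by (rule dvd_productE)
    thus "t \<in> (\<lambda>(d,e). d*e) ` ({d. d dvd a} \<times> {e. e dvd b})" by auto
  qed (auto intro: mult_dvd_mono)
  have inj: "inj_on (\<lambda>(d,e). d*e) ({d. d dvd a} \<times> {e. e dvd b})"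
  proof (rule inj_onI, clarsimp)
    fix d e d' e' :: nat
    assume h: "d dvd a" "e dvd b" "d' dvd a" "e' dvd b" "d*e = d'*e'"
    have c1: "coprime d e'" "coprime d' e" using assms(1) h
      by (meson coprime_imp_coprime dvd_trans)+
    have "d dvd d'*e'" "d' dvd d*e" using h(5) by (metis dvd_triv_left)+
    hence "d dvd d'" "d' dvd d" using c1
      by (meson coprime_dvd_mult_left_iff coprime_commute)+
    hence dd: "d = d'" by (rule dvd_antisym)
    have "d \<noteq> 0" using h assms by (metis dvd_0_left_iff not_gr0)
    thus "d = d' \<and> e = e'" using dd h(5) by simp
  qed
  have fin: "finite {d. d dvd a}" "finite {e. e dvd b}" using assms by auto
  show ?thesis
    unfolding eq sum.reindex[OF inj] using fin
    by (simp add: sum.cartesian_product split_def)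
qed

definition tm :: "nat \<Rightarrow> nat \<Rightarrow> rat" where
  "tm n t = (if squarefree (coprime_part t n) then 1 / of_nat (totient (coprime_part t n)) else 0)
            * of_nat (totient t)"

definition LL :: "nat \<Rightarrow> nat \<Rightarrow> rat" where
  "LL n r = (\<Sum>t | t dvd r. tm n t)"

definition RR :: "nat \<Rightarrow> nat \<Rightarrow> nat" where
  "RR n r = gcd r n * W (gcd r (coprime_part r n))"

lemma coprime_dvd_both: "coprime (a::nat) b \<Longrightarrow> d dvd a \<Longrightarrow> e dvd b \<Longrightarrow> coprime d e"
  by (meson coprime_imp_coprime dvd_trans)

lemma tm_mult:
  assumes "coprime d e"
  shows "tm n (d*e) = tm n d * tm n e"
proof -
  have c: "coprime (coprime_part d n) (coprime_part e n)"
    using coprime_dvd_both[OF assms cp_dvd cp_dvd] .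
  show ?thesis
    unfolding tm_def cp_mult[OF assms] sqf_mult_coprime_iff[OF c]
      totient_mult_coprime[OF c] totient_mult_coprime[OF assms]
    by (simp add: field_simps)
qed

lemma LL_mult:
  assumes "coprime a b" "a > 0" "b > 0"
  shows "LL n (a*b) = LL n a * LL n b"
proof -
  have "LL n (a*b) = (\<Sum>d | d dvd a. \<Sum>e | e dvd b. tm n (d*e))"
    unfolding LL_def by (rule dsum_mult[OF assms])
  also have "\<dots> = (\<Sum>d | d dvd a. \<Sum>e | e dvd b. tm n d * tm n e)"
    by (intro sum.cong refl tm_mult) (auto intro: coprime_dvd_both[OF assms(1)])
  also have "\<dots> = LL n a * LL n b"
    unfolding LL_def by (simp add: sum_product)
  finally show ?thesis .
qed

lemma W_sum:
  assumes "x > 0"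
  shows "W x = (\<Sum>d | d dvd x. if squarefree d then 1 else 0)"
proof -
  have "finite {d. d dvd x}" using assms by simp
  hence "(\<Sum>d | d dvd x. if squarefree d then 1 else (0::nat)) = card {d \<in> {d. d dvd x}. squarefree d}"
    by (simp add: sum.inter_filter[symmetric])
  thus ?thesis unfolding W_def by simp
qed

lemma W_mult:
  assumes "coprime a b" "a > 0" "b > 0"
  shows "W (a*b) = W a * W b"
proof -
  have "W (a*b) = (\<Sum>d | d dvd a. \<Sum>e | e dvd b. if squarefree (d*e) then 1 else 0)"
    using assms by (simp add: W_sum dsum_mult)
  also have "\<dots> = (\<Sum>d | d dvd a. \<Sum>e | e dvd b. (if squarefree d then 1 else 0) * (if squarefree e then 1 else 0))"
    by (intro sum.cong refl) (auto simp: sqf_mult_coprime_iff coprime_dvd_both[OF assms(1)])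
  also have "\<dots> = W a * W b"
    using assms by (simp add: W_sum sum_product)
  finally show ?thesis .
qed

lemma cp_pos: "(a::nat) > 0 \<Longrightarrow> coprime_part a n > 0"
  using cp_dvd[of a n] by (metis dvd_0_left_iff gr0I)

lemma RR_mult:
  assumes "coprime a b" "a > 0" "b > 0"
  shows "RR n (a*b) = RR n a * RR n b"
proof -
  let ?ca = "coprime_part a n" and ?cb = "coprime_part b n"
  have c1: "coprime a ?cb" using coprime_dvd_both[OF assms(1) dvd_refl cp_dvd] .
  have c2: "coprime b ?ca" using coprime_dvd_both[OF assms(1) cp_dvd dvd_refl] by (simp add: ac_simps)
  have "gcd (a*b) (?ca * ?cb) = gcd a (?ca * ?cb) * gcd b (?ca * ?cb)"
    by (rule gcd_mult_coprime_nat[OF assms(1)])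
  also have "\<dots> = gcd a ?ca * gcd b ?cb"
    using c1 c2 by (simp add: gcd_mult_right_right_cancel gcd_mult_right_left_cancel)
  finally have g: "gcd (a*b) (coprime_part (a*b) n) = gcd a ?ca * gcd b ?cb"
    by (simp add: cp_mult[OF assms(1)])
  have c3: "coprime (gcd a ?ca) (gcd b ?cb)"
    by (rule coprime_dvd_both[OF assms(1)]) auto
  have w: "W (gcd a ?ca * gcd b ?cb) = W (gcd a ?ca) * W (gcd b ?cb)"
    using W_mult[OF c3] assms by simp
  have gn: "gcd (a*b) n = gcd a n * gcd b n" by (rule gcd_mult_coprime_nat[OF assms(1)])
  show ?thesis unfolding RR_def g w gn
    by (simp add: ac_simps)
qed

lemma gcd_pp:
  fixes p :: nat
  assumes p: "prime p" and n: "n = p^b * k" and k: "\<not> p dvd k"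
  shows "gcd (p^j) n = p^(min j b)"
proof -
  have "coprime p k" using p k by (simp add: prime_imp_coprime)
  hence "coprime (p^j) k" by simp
  hence "gcd (p^j) n = gcd (p^j) (p^b)" unfolding n by (rule gcd_mult_right_right_cancel)
  also have "\<dots> = p^(min j b)"
  proof (cases "j \<le> b")
    case True
    hence "p^j dvd p^b" by (simp add: le_imp_power_dvd)
    thus ?thesis using True by (simp add: gcd_nat.absorb1)
  next
    case False
    hence "p^b dvd p^j" by (simp add: le_imp_power_dvd)
    thus ?thesis using False by (simp add: gcd_nat.absorb2)
  qed
  finally show ?thesis .
qed

lemma cp_pp:
  fixes p :: nat
  assumes p: "prime p" and n: "n = p^b * k" and k: "\<not> p dvd k"
  shows "coprime_part (p^j) n = p^(j - b)"
proof -
  have "p > 0" using p prime_gt_0_nat by blast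
  hence "p^j div p^(min j b) = p^(j - min j b)"
    by (simp add: power_diff)
  also have "j - min j b = j - b" by simp
  finally show ?thesis unfolding coprime_part_def gcd_pp[OF assms] .
qed

lemma sqf_pp:
  fixes p :: nat
  assumes p: "prime p"
  shows "squarefree (p^e) \<longleftrightarrow> e \<le> 1"
  using p by (auto simp: squarefree_power_iff squarefree_prime)

lemma tm_pp:
  fixes p :: nat
  assumes p: "prime p" and n: "n = p^b * k" and k: "\<not> p dvd k"
  shows "tm n (p^j) = (if j - b \<le> 1 then of_nat (totient (p^j)) / of_nat (totient (p^(j-b))) else 0)"
  unfolding tm_def cp_pp[OF assms] sqf_pp[OF p] by simp

lemma dvd_pp_set:
  fixes p :: nat
  assumes p: "prime p"
  shows "{t. t dvd p^a} = (\<lambda>j. p^j) ` {..a}"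
  using divides_primepow_nat[OF p] by auto

lemma inj_pp:
  fixes p :: nat
  assumes p: "prime p"
  shows "inj_on (\<lambda>j. p^j) A"
proof -
  have "p > 1" using p prime_gt_1_nat by blast
  thus ?thesis by (auto intro!: inj_onI simp: power_inject_exp)
qed

lemma sum_pp:
  fixes p :: nat
  assumes p: "prime p" and n: "n = p^b * k" and k: "\<not> p dvd k"
  shows "(\<Sum>j\<le>a. tm n (p^j)) = (if a \<le> b then of_nat (p^a) else 2 * of_nat (p^b))"
proof (induction a)
  case 0
  then show ?case using tm_pp[OF assms, of 0] by simp
next
  case (Suc a)
  have p1: "p \<ge> 2" using p prime_ge_2_nat by blast
  have t1: "of_nat (totient p) = (of_nat p - 1 :: rat)"
    using totient_prime[OF p] p1 by (simp add: of_nat_diff)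
  have tS: "of_nat (totient (p^Suc a)) = (of_nat p ^ a * (of_nat p - 1) :: rat)"
    using totient_prime_power_Suc[OF p, of a] p1 by (simp add: of_nat_diff)
  consider "Suc a \<le> b" | "a = b" | "Suc a > Suc b" by linarith
  then show ?case
  proof cases
    case 1
    hence "tm n (p^Suc a) = of_nat p ^ a * (of_nat p - 1)"
      using tm_pp[OF assms, of "Suc a"] tS by simp
    with 1 Suc show ?thesis by (simp add: algebra_simps)
  next
    case 2
    have "of_nat p - 1 \<noteq> (0::rat)" using p1 by simp
    hence "tm n (p^Suc a) = of_nat p ^ b"
      using tm_pp[OF assms, of "Suc a"] tS t1 2 by (simp add: Suc_diff_le)
    with 2 Suc show ?thesis by simp
  next
    case 3
    hence "tm n (p^Suc a) = 0"
      using tm_pp[OF assms, of "Suc a"] by simp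
    with 3 Suc show ?thesis by simp
  qed
qed

lemma W_pp:
  fixes p :: nat
  assumes p: "prime p"
  shows "W (p^e) = (if e = 0 then 1 else 2)"
proof (cases "e = 0")
  case True
  have "{d. d dvd (1::nat) \<and> squarefree d} = {1}" by auto
  then show ?thesis using True unfolding W_def by simp
next
  case False
  have "{d. d dvd p^e \<and> squarefree d} = {1, p}"
  proof safe
    fix d assume "d dvd p^e" "squarefree d"
    then obtain i where "i \<le> e" "d = p^i" "squarefree (p^i)"
      using divides_primepow_nat[OF p] by auto
    hence "i \<le> 1" using sqf_pp[OF p] by simp
    thus "d \<noteq> 1 \<Longrightarrow> d = p" using \<open>d = p^i\<close> by (cases i) auto
  next
    show "p dvd p^e" using False by (simp add: dvd_power)
  qed (use p squarefree_prime in auto)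
  moreover have "p \<noteq> 1" using p by auto
  ultimately show ?thesis using False unfolding W_def by simp
qed

lemma main_pp:
  fixes p :: nat
  assumes p: "prime p" and n0: "n > 0"
  shows "LL n (p^a) = of_nat (RR n (p^a))"
proof -
  define b where "b = multiplicity p n"
  obtain k where n: "n = p^b * k" and k: "\<not> p dvd k"
  proof -
    have "\<not> is_unit p" using p not_prime_unit by blast
    thus ?thesis using multiplicity_decompose'[of n p] n0 that unfolding b_def by auto
  qed
  have "LL n (p^a) = (\<Sum>j\<le>a. tm n (p^j))"
    unfolding LL_def dvd_pp_set[OF p] by (simp add: sum.reindex[OF inj_pp[OF p]])
  also have "\<dots> = (if a \<le> b then of_nat (p^a) else 2 * of_nat (p^b))"
    by (rule sum_pp[OF p n k])
  also have "\<dots> = of_nat (RR n (p^a))"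
  proof -
    have g: "gcd (p^a) (p^(a-b)) = p^(a-b)"
      by (simp add: gcd_nat.absorb2 le_imp_power_dvd)
    show ?thesis
      unfolding RR_def gcd_pp[OF p n k] cp_pp[OF p n k] g W_pp[OF p]
      by (simp add: min_def)
  qed
  finally show ?thesis .
qed

lemma main_LL:
  assumes "r > 0" "n > 0"
  shows "LL n r = of_nat (RR n r)"
  using assms(1)
proof (induction r rule: less_induct)
  case (less r)
  show ?case
  proof (cases "r = 1")
    case True
    then show ?thesis using main_pp[OF two_is_prime_nat assms(2), of 0] by simp
  next
    case False
    then obtain p where p: "prime p" "p dvd r" using prime_factor_nat by blast
    define a where "a = multiplicity p r"
    have "\<not> is_unit p" using p not_prime_unit by blast
    then obtain m where r: "r = p^a * m" and m: "\<not> p dvd m"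
      using multiplicity_decompose'[of r p] less.prems unfolding a_def by auto
    have a1: "a \<ge> 1" unfolding a_def using p less.prems prime_multiplicity_gt_zero_iff[of p r]
      by (simp add: prime_imp_prime_elem)
    have p2: "p \<ge> 2" using p prime_ge_2_nat by blast
    have m0: "m > 0" using r less.prems by (metis gr0I mult_0_right)
    have "p \<le> p^a" using a1 p2 by (simp add: self_le_power)
    hence pa2: "p^a \<ge> 2" using p2 by linarith
    have "1 * m < p^a * m" using pa2 m0 by (intro mult_strict_right_mono) auto
    hence mr: "m < r" using r by simp
    have cop: "coprime (p^a) m" using p m by (simp add: prime_imp_coprime)
    have pa0: "p^a > 0" using p2 by simp
    have "LL n r = LL n (p^a) * LL n m" unfolding r by (rule LL_mult[OF cop pa0 m0])
    also have "\<dots> = of_nat (RR n (p^a)) * of_nat (RR n m)"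
      using main_pp[OF p(1) assms(2)] less.IH[OF mr m0] by simp
    also have "\<dots> = of_nat (RR n r)" unfolding r RR_mult[OF cop pa0 m0] by simp
    finally show ?thesis .
  qed
qed

theorem lemma2p4:
  fixes r n :: nat
  assumes "r > 0" and "n > 0"
  shows "(\<Sum>t | t dvd r.
            (of_int \<bar>moebius_mu (coprime_part t n)\<bar> / of_nat (totient (coprime_part t n)))
            * of_nat (totient t) :: rat)
         = of_nat (gcd r n * W (gcd r (coprime_part r n)))"
proof -
  have "(\<Sum>t | t dvd r.
            (of_int \<bar>moebius_mu (coprime_part t n)\<bar> / of_nat (totient (coprime_part t n)))
            * of_nat (totient t) :: rat) = LL n r"
    unfolding LL_def tm_def by (intro sum.cong refl) (simp add: moebius_mu_def power_abs)
  also have "\<dots> = of_nat (RR n r)" by (rule main_LL[OF assms])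
  finally show ?thesis unfolding RR_def .
qed

end
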